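(* Let $V$ be a reflexive Banach space, $F: V\to\mathbb{R}$ Fréchet differentiable and convex, $G\in\Gamma_0(V)$, $E=F+G$. For $1\le k\le N$ let $V_k$ be reflexive Banach spaces, $R_k^*: V_k\to V$ bounded linear with $V=\sum_k R_k^*V_k$ and surjective adjoints, and $d_k, G_k: V_k\times V\to\overline{\mathbb{R}}$ proper, convex, lower semicontinuous in the first argument. Assume: (i) (stable decomposition) there is $q>1$ such that for every bounded convex $K\subseteq V$ there is $C_{0,K}>0$ such that for all $u,v\in K\cap\operatorname{dom}G$ there exist $w_k\in V_k$ with $u-v=\sum_{k=1}^N R_k^*w_k$, $\sum_{k=1}^N d_k(w_k,v)\le \frac{C_{0,K}^q}{q}\|u-v\|^q$ and $\sum_{k=1}^N G_k(w_k,v)\le G(u)+(N-1)G(v)$; (ii) (strengthened convexity) there is $\tau_0\in(0,1]$ such that for all $v\in V$, $w_k\in V_k$, $\tau\in(0,\tau_0]$: $(1-\tau N)E(v)+\tau\sum_{k=1}^N E(v+R_k^*w_k)\ge E(v+\tau\sum_{k=1}^N R_k^*w_k)$; (iii) (local stability) there is $\omega_0>0$ such that for all $v\in\operatorname{dom}G$, $w_k\in V_k$, $1\le k\le N$: $D_F(v+R_k^*w_k,v)\le\omega_0 d_k(w_k,v)$ and $G(v+R_k^*w_k)\le G_k(w_k,v)$. Let $\tau\in(0,\tau_0]$, $\omega\ge\omega_0$. Then for every bounded convex $K\subseteq V$, $$D_F(u,v)+G(u)\le M_{\tau,\omega}(u,v)\le\frac{\omega C_{0,K'}^q}{q\tau^{q-1}}\|u-v\|^q+\tau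 G\Big(\frac1\tau u-\Big(\frac1\tau-1\Big)v\Big)+(1-\tau)G(v),\quad u,v\in K\cap\operatorname{dom}G,$$ where $K'=\{\frac1\tau u-(\frac1\tau-1)v : u,v\in K\}$ and $M_{\tau,\omega}(u,v)=\tau\inf\{\sum_{k=1}^N(\omega d_k+G_k)(w_k,v): u-v=\tau\sum_{k=1}^N R_k^*w_k,\ w_k\in V_k\}+(1-\tau N)G(v)$.
   Context: $\Gamma_0(V)$ is the set of proper, convex, lower semicontinuous functionals $V\to\mathbb{R}\cup\{+\infty\}$; $\operatorname{dom} G=\{u: G(u)<\infty\}$. Bregman distance: $D_F(u,v)=F(u)-F(v)-\langle F'(v),u-v\rangle$. *)

theory Defs
  imports "HOL-Analysis.Analysis"
begin

definition reflexive_space :: "'a::banach itself \<Rightarrow> bool" where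
  "reflexive_space _ \<longleftrightarrow>
     (\<forall>\<phi> :: ('a \<Rightarrow>\<^sub>L real) \<Rightarrow>\<^sub>L real. \<exists>x::'a. \<forall>f. blinfun_apply \<phi> f = blinfun_apply f x)"

definition ereal_convex_on :: "'a::real_vector set \<Rightarrow> ('a \<Rightarrow> ereal) \<Rightarrow> bool" where
  "ereal_convex_on S f \<longleftrightarrow>
     (\<forall>x\<in>S. \<forall>y\<in>S. \<forall>t::real. 0 \<le> t \<and> t \<le> 1 \<longrightarrow>
        f ((1 - t) *\<^sub>R x + t *\<^sub>R y) \<le> ereal (1 - t) * f x + ereal t * f y)"

definition ereal_lsc_on :: "'a::metric_space set \<Rightarrow> ('a \<Rightarrow> ereal) \<Rightarrow> bool" where
  "ereal_lsc_on S f \<longleftrightarrow>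
     (\<forall>x\<in>S. \<forall>X. (\<forall>n. X n \<in> S) \<and> X \<longlonglongrightarrow> x \<longrightarrow> f x \<le> liminf (\<lambda>n. f (X n)))"

definition proper_convex_lsc_on :: "'a::real_normed_vector set \<Rightarrow> ('a \<Rightarrow> ereal) \<Rightarrow> bool" where
  "proper_convex_lsc_on S f \<longleftrightarrow>
     (\<forall>x\<in>S. f x \<noteq> -\<infinity>) \<and> (\<exists>x\<in>S. f x < \<infinity>) \<and> ereal_convex_on S f \<and> ereal_lsc_on S f"

definition Gamma0 :: "('a::real_normed_vector \<Rightarrow> ereal) \<Rightarrow> bool" where
  "Gamma0 G \<longleftrightarrow> proper_convex_lsc_on UNIV G"

definition edom :: "('a \<Rightarrow> ereal) \<Rightarrow> 'a set" where
  "edom G = {u. G u < \<infinity>}"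

definition bregman :: "('a::real_normed_vector \<Rightarrow> real) \<Rightarrow> 'a \<Rightarrow> 'a \<Rightarrow> real" where
  "bregman F u v = F u - F v - frechet_derivative F (at v) (u - v)"

text \<open>M_{tau,omega}(u,v); the spaces V_k are the sets Vk k, R k plays the role of R_k^*.\<close>
definition M_tau_omega ::
  "nat \<Rightarrow> (nat \<Rightarrow> 'w::real_vector set) \<Rightarrow> (nat \<Rightarrow> 'w \<Rightarrow> 'v::real_vector)
   \<Rightarrow> (nat \<Rightarrow> 'w \<Rightarrow> 'v \<Rightarrow> ereal) \<Rightarrow> (nat \<Rightarrow> 'w \<Rightarrow> 'v \<Rightarrow> ereal) \<Rightarrow> ('v \<Rightarrow> ereal)
   \<Rightarrow> real \<Rightarrow> real \<Rightarrow> 'v \<Rightarrow> 'v \<Rightarrow> ereal" where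
  "M_tau_omega N Vk R d Gk G \<tau> \<omega> u v =
     ereal \<tau> * Inf {(\<Sum>k=1..N. ereal \<omega> * d k (w k) v + Gk k (w k) v) | w.
                     (\<forall>k\<in>{1..N}. w k \<in> Vk k) \<and> u - v = \<tau> *\<^sub>R (\<Sum>k=1..N. R k (w k))}
     + ereal (1 - \<tau> * real N) * G v"

end

theory Submission
  imports Defs
begin
lemma bregman_nonneg:
  fixes F :: "'v::real_normed_vector \<Rightarrow> real"
  assumes d: "F differentiable (at x)" and c: "convex_on UNIV F"
  shows "bregman F y x \<ge> 0"
proof -
  let ?D = "frechet_derivative F (at x)"
  have fd: "(F has_derivative ?D) (at x)" using d frechet_derivative_works by blast
  define g where "g t = F (x + t *\<^sub>R (y - x))" for t :: real
  have gc: "convex_on UNIV g"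
  proof (rule convex_onI)
    fix t a b :: real assume t: "0 < t" "t < 1"
    have "x + ((1 - t) * a + t * b) *\<^sub>R (y - x) = (1 - t) *\<^sub>R (x + a *\<^sub>R (y - x)) + t *\<^sub>R (x + b *\<^sub>R (y - x))"
      by (simp add: algebra_simps)
    then show "g ((1 - t) *\<^sub>R a + t *\<^sub>R b) \<le> (1 - t) * g a + t * g b"
      unfolding g_def using convex_onD[OF c, of t "x + a *\<^sub>R (y - x)" "x + b *\<^sub>R (y - x)"] t by simp
  qed auto
  have lin: "((\<lambda>t::real. x + t *\<^sub>R (y - x)) has_derivative (\<lambda>t. t *\<^sub>R (y - x))) (at 0)"
    by (auto intro!: derivative_eq_intros)
  have "(g has_derivative (\<lambda>t. ?D (t *\<^sub>R (y - x)))) (at 0)"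
    unfolding g_def using has_derivative_compose[OF lin, of F ?D] fd by (simp add: o_def)
  moreover have "linear ?D" using fd has_derivative_linear by blast
  ultimately have "(g has_derivative (\<lambda>t. t * ?D (y - x))) (at 0)"
    by (simp add: linear_scale)
  then have "(g has_field_derivative ?D (y - x)) (at 0 within UNIV)"
    unfolding has_field_derivative_def by (simp add: mult.commute[of _ "?D (y - x)"])
  from convex_on_imp_above_tangent[OF gc _ _ _ this, of 1] have "g 1 - g 0 \<ge> ?D (y - x) * (1 - 0)" by simp
  then show ?thesis unfolding bregman_def g_def by simp
qed

lemma sum_fin_le:
  fixes f :: "'a \<Rightarrow> ereal"
  assumes "finite A" "\<And>i. i \<in> A \<Longrightarrow> f i \<noteq> -\<infinity>" "sum f A \<le> ereal c" "i \<in> A"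
  shows "f i \<noteq> \<infinity>"
proof
  assume "f i = \<infinity>"
  then have "sum f A = \<infinity>" using assms(1,4) sum_Pinfty[of f A] by auto
  then show False using assms(3) by simp
qed

lemma sum_ereal_eq:
  fixes f :: "'a \<Rightarrow> ereal"
  assumes "\<And>i. i \<in> A \<Longrightarrow> f i = ereal (g i)"
  shows "sum f A = ereal (sum g A)"
  using sum.cong[of A A f "\<lambda>i. ereal (g i)"] assms by simp

theorem lemma4p6:
  fixes F :: "'v::banach \<Rightarrow> real" and G :: "'v \<Rightarrow> ereal"
    and N :: nat
    and Vk :: "nat \<Rightarrow> 'w::banach set"
    and R :: "nat \<Rightarrow> 'w \<Rightarrow> 'v"
    and d Gk :: "nat \<Rightarrow> 'w \<Rightarrow> 'v \<Rightarrow> ereal"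
    and q \<tau>0 \<omega>0 \<tau> \<omega> :: real
    and C0 :: "'v set \<Rightarrow> real"
  defines "E \<equiv> (\<lambda>v. ereal (F v) + G v)"
  assumes reflV: "reflexive_space TYPE('v)"
    and reflW: "reflexive_space TYPE('w)"
    and F_diff: "\<forall>x. F differentiable (at x)"
    and F_conv: "convex_on UNIV F"
    and G_Gamma0: "Gamma0 G"
    and N_pos: "N \<ge> 1"
    and Vk_sub: "\<forall>k\<in>{1..N}. subspace (Vk k) \<and> closed (Vk k)"
    and R_lin: "\<forall>k\<in>{1..N}. bounded_linear (R k)"
    and sum_decomp: "\<forall>u. \<exists>w. (\<forall>k\<in>{1..N}. w k \<in> Vk k) \<and> u = (\<Sum>k=1..N. R k (w k))"
    and adj_surj: "\<forall>k\<in>{1..N}. \<forall>g :: 'w \<Rightarrow>\<^sub>L real. \<exists>f :: 'v \<Rightarrow>\<^sub>L real.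
                      \<forall>x\<in>Vk k. blinfun_apply f (R k x) = blinfun_apply g x"
    and d_pcl: "\<forall>k\<in>{1..N}. \<forall>v. proper_convex_lsc_on (Vk k) (\<lambda>w. d k w v)"
    and Gk_pcl: "\<forall>k\<in>{1..N}. \<forall>v. proper_convex_lsc_on (Vk k) (\<lambda>w. Gk k w v)"
    and q_gt: "q > 1"
    and stable: "\<forall>K. bounded K \<and> convex K \<longrightarrow> C0 K > 0 \<and>
                  (\<forall>u\<in>K \<inter> edom G. \<forall>v\<in>K \<inter> edom G. \<exists>w.
                     (\<forall>k\<in>{1..N}. w k \<in> Vk k) \<and> u - v = (\<Sum>k=1..N. R k (w k)) \<and>
                     (\<Sum>k=1..N. d k (w k) v) \<le> ereal (C0 K powr q / q * norm (u - v) powr q) \<and>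
                     (\<Sum>k=1..N. Gk k (w k) v) \<le> G u + ereal (real N - 1) * G v)"
    and tau0: "0 < \<tau>0" "\<tau>0 \<le> 1"
    and strong_conv: "\<forall>v w t. (\<forall>k\<in>{1..N}. w k \<in> Vk k) \<and> 0 < t \<and> t \<le> \<tau>0 \<longrightarrow>
                  ereal (1 - t * real N) * E v + ereal t * (\<Sum>k=1..N. E (v + R k (w k)))
                    \<ge> E (v + t *\<^sub>R (\<Sum>k=1..N. R k (w k)))"
    and omega0: "\<omega>0 > 0"
    and local_stab: "\<forall>v\<in>edom G. \<forall>k\<in>{1..N}. \<forall>w\<in>Vk k.
                  ereal (bregman F (v + R k w) v) \<le> ereal \<omega>0 * d k w v \<and>
                  G (v + R k w) \<le> Gk k w v"
    and tau: "0 < \<tau>" "\<tau> \<le> \<tau>0"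
    and omega: "\<omega> \<ge> \<omega>0"
  shows "\<forall>K. bounded K \<and> convex K \<longrightarrow>
           (let K' = {(1 / \<tau>) *\<^sub>R u - (1 / \<tau> - 1) *\<^sub>R v | u v. u \<in> K \<and> v \<in> K} in
            \<forall>u\<in>K \<inter> edom G. \<forall>v\<in>K \<inter> edom G.
              ereal (bregman F u v) + G u \<le> M_tau_omega N Vk R d Gk G \<tau> \<omega> u v \<and>
              M_tau_omega N Vk R d Gk G \<tau> \<omega> u v
                \<le> ereal (\<omega> * C0 K' powr q / (q * \<tau> powr (q - 1)) * norm (u - v) powr q)
                  + ereal \<tau> * G ((1 / \<tau>) *\<^sub>R u - (1 / \<tau> - 1) *\<^sub>R v)
                  + ereal (1 - \<tau>) * G v)"
proof -
  have main: "\<forall>u\<in>K \<inter> edom G. \<forall>v\<in>K \<inter> edom G.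
              ereal (bregman F u v) + G u \<le> M_tau_omega N Vk R d Gk G \<tau> \<omega> u v \<and>
              M_tau_omega N Vk R d Gk G \<tau> \<omega> u v
                \<le> ereal (\<omega> * C0 {(1 / \<tau>) *\<^sub>R u - (1 / \<tau> - 1) *\<^sub>R v | u v. u \<in> K \<and> v \<in> K} powr q / (q * \<tau> powr (q - 1)) * norm (u - v) powr q)
                  + ereal \<tau> * G ((1 / \<tau>) *\<^sub>R u - (1 / \<tau> - 1) *\<^sub>R v)
                  + ereal (1 - \<tau>) * G v" if K: "bounded K \<and> convex K" for K
  proof -
  define K' where "K' = {(1 / \<tau>) *\<^sub>R u - (1 / \<tau> - 1) *\<^sub>R v | u v. u \<in> K \<and> v \<in> K}"
  have Gninf: "\<And>x. G x \<noteq> -\<infinity>" using conjunct1[OF G_Gamma0[unfolded Gamma0_def proper_convex_lsc_on_def]] by simp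
  have dninf: "\<And>k w x. k \<in> {1..N} \<Longrightarrow> w \<in> Vk k \<Longrightarrow> d k w x \<noteq> -\<infinity>"
  proof -
    fix k w x assume "k \<in> {1..N}" "w \<in> Vk k"
    then have "proper_convex_lsc_on (Vk k) (\<lambda>w. d k w x)" using d_pcl by simp
    from conjunct1[OF this[unfolded proper_convex_lsc_on_def]] show "d k w x \<noteq> -\<infinity>" using \<open>w \<in> Vk k\<close> by simp
  qed
  have Gkninf: "\<And>k w x. k \<in> {1..N} \<Longrightarrow> w \<in> Vk k \<Longrightarrow> Gk k w x \<noteq> -\<infinity>"
  proof -
    fix k w x assume "k \<in> {1..N}" "w \<in> Vk k"
    then have "proper_convex_lsc_on (Vk k) (\<lambda>w. Gk k w x)" using Gk_pcl by simp
    from conjunct1[OF this[unfolded proper_convex_lsc_on_def]] show "Gk k w x \<noteq> -\<infinity>" using \<open>w \<in> Vk k\<close> by simp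
  qed
  have dnn: "d k w x \<ge> 0" if k: "k \<in> {1..N}" and w: "w \<in> Vk k" and x: "x \<in> edom G" for k w x
  proof -
    have "ereal (bregman F (x + R k w) x) \<le> ereal \<omega>0 * d k w x" using local_stab k w x by blast
    moreover have "bregman F (x + R k w) x \<ge> 0" using bregman_nonneg F_diff F_conv by blast
    ultimately have "0 \<le> ereal \<omega>0 * d k w x" using order_trans[of 0 "ereal (bregman F (x + R k w) x)"] by simp
    then show ?thesis using omega0 dninf[OF k w, of x]
      by (cases "d k w x") (auto simp: zero_le_mult_iff)
  qed
  have lin: "linear (frechet_derivative F (at x))" for x
    using F_diff frechet_derivative_works has_derivative_linear by blast
  have Nfin: "finite {1..N}" by simp
  have main: "\<forall>u\<in>K \<inter> edom G. \<forall>v\<in>K \<inter> edom G.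
              ereal (bregman F u v) + G u \<le> M_tau_omega N Vk R d Gk G \<tau> \<omega> u v \<and>
              M_tau_omega N Vk R d Gk G \<tau> \<omega> u v
                \<le> ereal (\<omega> * C0 K' powr q / (q * \<tau> powr (q - 1)) * norm (u - v) powr q)
                  + ereal \<tau> * G ((1 / \<tau>) *\<^sub>R u - (1 / \<tau> - 1) *\<^sub>R v)
                  + ereal (1 - \<tau>) * G v"
  proof (intro ballI conjI)
    fix u v assume u: "u \<in> K \<inter> edom G" and v: "v \<in> K \<inter> edom G"
    obtain gv where gv: "G v = ereal gv" using v Gninf[of v] unfolding edom_def by (cases "G v") auto
    obtain gu where gu: "G u = ereal gu" using u Gninf[of u] unfolding edom_def by (cases "G u") auto
    define S where "S = {(\<Sum>k=1..N. ereal \<omega> * d k (w k) v + Gk k (w k) v) | w.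
                     (\<forall>k\<in>{1..N}. w k \<in> Vk k) \<and> u - v = \<tau> *\<^sub>R (\<Sum>k=1..N. R k (w k))}"
    have M: "M_tau_omega N Vk R d Gk G \<tau> \<omega> u v = ereal \<tau> * Inf S + ereal ((1 - \<tau> * real N) * gv)"
      unfolding M_tau_omega_def S_def gv by simp
    define D where "D = frechet_derivative F (at v)"
    have linD: "linear D" unfolding D_def by (rule lin)
    show "ereal (bregman F u v) + G u \<le> M_tau_omega N Vk R d Gk G \<tau> \<omega> u v"
    proof -
      define L where "L = bregman F u v + gu"
      define c where "c = (1 - \<tau> * real N) * gv"
      have low: "ereal ((L - c) / \<tau>) \<le> s" if "s \<in> S" for s
      proof -
        from that obtain w where w: "\<forall>k\<in>{1..N}. w k \<in> Vk k" and uv: "u - v = \<tau> *\<^sub>R (\<Sum>k=1..N. R k (w k))"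
          and s: "s = (\<Sum>k=1..N. ereal \<omega> * d k (w k) v + Gk k (w k) v)" unfolding S_def by blast
        show ?thesis
        proof (cases "\<exists>k\<in>{1..N}. d k (w k) v = \<infinity> \<or> Gk k (w k) v = \<infinity>")
          case True
          then obtain k where k: "k \<in> {1..N}" and inf: "d k (w k) v = \<infinity> \<or> Gk k (w k) v = \<infinity>" by blast
          have "ereal \<omega> * d k (w k) v + Gk k (w k) v = \<infinity>"
            using inf omega omega0 Gkninf[OF k w[rule_format, OF k]] by auto
          then have "s = \<infinity>" unfolding s sum_Pinfty using k by auto
          then show ?thesis by simp
        next
          case False
          define dr where "dr k = real_of_ereal (d k (w k) v)" for k
          define gr where "gr k = real_of_ereal (Gk k (w k) v)" for k
          define ge where "ge k = real_of_ereal (G (v + R k (w k)))" for k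
          have dr: "d k (w k) v = ereal (dr k)" if "k \<in> {1..N}" for k
            using False that dninf[OF that w[rule_format, OF that]] unfolding dr_def by (cases "d k (w k) v") auto
          have gr: "Gk k (w k) v = ereal (gr k)" if "k \<in> {1..N}" for k
            using False that Gkninf[OF that w[rule_format, OF that]] unfolding gr_def by (cases "Gk k (w k) v") auto
          have ls: "ereal (bregman F (v + R k (w k)) v) \<le> ereal \<omega>0 * d k (w k) v \<and> G (v + R k (w k)) \<le> Gk k (w k) v"
            if "k \<in> {1..N}" for k using local_stab v that w by blast
          have ge: "G (v + R k (w k)) = ereal (ge k) \<and> ge k \<le> gr k" if k: "k \<in> {1..N}" for k
            using ls[OF k] gr[OF k] Gninf[of "v + R k (w k)"] unfolding ge_def by (cases "G (v + R k (w k))") auto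
          have drnn: "dr k \<ge> 0" if k: "k \<in> {1..N}" for k
            using dnn[OF k w[rule_format, OF k], of v] v dr[OF k] by auto
          have Fk: "F (v + R k (w k)) \<le> F v + D (R k (w k)) + \<omega> * dr k" if k: "k \<in> {1..N}" for k
          proof -
            have "bregman F (v + R k (w k)) v \<le> \<omega>0 * dr k" using ls[OF k] dr[OF k] by simp
            moreover have "\<omega>0 * dr k \<le> \<omega> * dr k" using omega drnn[OF k] by (simp add: mult_right_mono)
            ultimately show ?thesis unfolding bregman_def D_def by simp
          qed
          have sE: "s = ereal (\<Sum>k=1..N. \<omega> * dr k + gr k)"
            unfolding s by (rule sum_ereal_eq) (simp add: dr gr)
          have Ev: "E v = ereal (F v + gv)" unfolding E_def gv by simp
          have Eu: "E u = ereal (F u + gu)" unfolding E_def gu by simp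
          have Ek: "(\<Sum>k=1..N. E (v + R k (w k))) = ereal (\<Sum>k=1..N. F (v + R k (w k)) + ge k)"
            by (rule sum_ereal_eq) (simp add: E_def ge)
          have "u = v + \<tau> *\<^sub>R (\<Sum>k=1..N. R k (w k))" using uv by (simp add: algebra_simps)
          then have "E u \<le> ereal (1 - \<tau> * real N) * E v + ereal \<tau> * (\<Sum>k=1..N. E (v + R k (w k)))"
            using strong_conv tau w by auto
          then have main: "F u + gu \<le> (1 - \<tau> * real N) * (F v + gv) + \<tau> * (\<Sum>k=1..N. F (v + R k (w k)) + ge k)"
            unfolding Eu Ev Ek by simp
          have "(\<Sum>k=1..N. F (v + R k (w k)) + ge k) \<le> (\<Sum>k=1..N. F v + D (R k (w k)) + (\<omega> * dr k + gr k))"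
            by (rule sum_mono) (use Fk ge in fastforce)
          also have "\<dots> = real N * F v + D (\<Sum>k=1..N. R k (w k)) + (\<Sum>k=1..N. \<omega> * dr k + gr k)"
            by (simp add: sum.distrib linear_sum[OF linD])
          finally have sumb: "(\<Sum>k=1..N. F (v + R k (w k)) + ge k) \<le> real N * F v + D (\<Sum>k=1..N. R k (w k)) + (\<Sum>k=1..N. \<omega> * dr k + gr k)" .
          have Duv: "D (u - v) = \<tau> * D (\<Sum>k=1..N. R k (w k))" unfolding uv using linear_scale[OF linD] by simp
          have "L - c \<le> \<tau> * (\<Sum>k=1..N. \<omega> * dr k + gr k)"
            using main mult_left_mono[OF sumb, of \<tau>] tau Duv unfolding L_def c_def bregman_def D_def[symmetric]
            by (simp add: algebra_simps)
          then have "(L - c) / \<tau> \<le> (\<Sum>k=1..N. \<omega> * dr k + gr k)" using tau by (simp add: divide_le_eq mult.commute)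
          then show ?thesis unfolding sE by simp
        qed
      qed
      have "ereal ((L - c) / \<tau>) \<le> Inf S" by (rule Inf_greatest) (rule low)
      then have "ereal \<tau> * ereal ((L - c) / \<tau>) \<le> ereal \<tau> * Inf S" using tau by (intro ereal_mult_left_mono) auto
      then have "ereal (L - c) \<le> ereal \<tau> * Inf S" using tau by simp
      then have "ereal (L - c) + ereal c \<le> ereal \<tau> * Inf S + ereal c" by (rule add_right_mono)
      then show ?thesis unfolding M gu L_def c_def by simp
    qed
    show "M_tau_omega N Vk R d Gk G \<tau> \<omega> u v
                \<le> ereal (\<omega> * C0 K' powr q / (q * \<tau> powr (q - 1)) * norm (u - v) powr q)
                  + ereal \<tau> * G ((1 / \<tau>) *\<^sub>R u - (1 / \<tau> - 1) *\<^sub>R v)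
                  + ereal (1 - \<tau>) * G v"
    proof (cases "G ((1 / \<tau>) *\<^sub>R u - (1 / \<tau> - 1) *\<^sub>R v) = \<infinity>")
      case True
      then show ?thesis using tau gv by simp
    next
      case False
      define u' where "u' = (1 / \<tau>) *\<^sub>R u - (1 / \<tau> - 1) *\<^sub>R v"
      have "G u' \<noteq> \<infinity>" using False unfolding u'_def .
      then obtain gu' where gu': "G u' = ereal gu'" using Gninf[of u'] by (cases "G u'") auto
      have K'eq: "K' = (\<lambda>p. (1 / \<tau>) *\<^sub>R fst p - (1 / \<tau> - 1) *\<^sub>R snd p) ` (K \<times> K)"
        unfolding K'_def by force
      have blin: "bounded_linear (\<lambda>p::'v \<times> 'v. (1 / \<tau>) *\<^sub>R fst p - (1 / \<tau> - 1) *\<^sub>R snd p)"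
        by (intro bounded_linear_intros)
      have bK': "bounded K'" unfolding K'eq using K by (intro bounded_linear_image[OF bounded_Times blin]) auto
      have cK': "convex K'" unfolding K'eq using K
        by (intro convex_linear_image convex_Times bounded_linear.linear[OF blin]) auto
      have u'K: "u' \<in> K' \<inter> edom G" unfolding K'_def u'_def edom_def using u v False by auto
      have "v = (1 / \<tau>) *\<^sub>R v - (1 / \<tau> - 1) *\<^sub>R v" by (simp add: algebra_simps)
      then have vK: "v \<in> K' \<inter> edom G" unfolding K'_def using v by blast
      have st: "\<exists>w. (\<forall>k\<in>{1..N}. w k \<in> Vk k) \<and> u' - v = (\<Sum>k=1..N. R k (w k)) \<and>
                     (\<Sum>k=1..N. d k (w k) v) \<le> ereal (C0 K' powr q / q * norm (u' - v) powr q) \<and>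
                     (\<Sum>k=1..N. Gk k (w k) v) \<le> G u' + ereal (real N - 1) * G v"
        using stable bK' cK' u'K vK by blast
      then obtain w where w: "\<forall>k\<in>{1..N}. w k \<in> Vk k" and dec: "u' - v = (\<Sum>k=1..N. R k (w k))"
        and sd: "(\<Sum>k=1..N. d k (w k) v) \<le> ereal (C0 K' powr q / q * norm (u' - v) powr q)"
        and sg: "(\<Sum>k=1..N. Gk k (w k) v) \<le> G u' + ereal (real N - 1) * G v"
        by blast
      have sg': "(\<Sum>k=1..N. Gk k (w k) v) \<le> ereal (gu' + (real N - 1) * gv)" using sg gu' gv by simp
      have dfin: "d k (w k) v \<noteq> \<infinity>" if k: "k \<in> {1..N}" for k
        by (rule sum_fin_le[OF Nfin _ sd k]) (use dninf w in blast)
      have gfin: "Gk k (w k) v \<noteq> \<infinity>" if k: "k \<in> {1..N}" for k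
        by (rule sum_fin_le[OF Nfin _ sg' k]) (use Gkninf w in blast)
      define dr where "dr k = real_of_ereal (d k (w k) v)" for k
      define gr where "gr k = real_of_ereal (Gk k (w k) v)" for k
      have dr: "d k (w k) v = ereal (dr k)" if k: "k \<in> {1..N}" for k
        using dfin[OF k] dninf[OF k, of "w k" v] w k unfolding dr_def by (cases "d k (w k) v") auto
      have gr: "Gk k (w k) v = ereal (gr k)" if k: "k \<in> {1..N}" for k
        using gfin[OF k] Gkninf[OF k, of "w k" v] w k unfolding gr_def by (cases "Gk k (w k) v") auto
      have "(\<Sum>k=1..N. d k (w k) v) = ereal (\<Sum>k=1..N. dr k)" by (rule sum_ereal_eq) (simp add: dr)
      then have sdr: "(\<Sum>k=1..N. dr k) \<le> C0 K' powr q / q * norm (u' - v) powr q" using sd by simp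
      have "(\<Sum>k=1..N. Gk k (w k) v) = ereal (\<Sum>k=1..N. gr k)" by (rule sum_ereal_eq) (simp add: gr)
      then have sgr: "(\<Sum>k=1..N. gr k) \<le> gu' + (real N - 1) * gv" using sg' by simp
      have "\<tau> *\<^sub>R (u' - v) = u - v" unfolding u'_def using tau by (simp add: algebra_simps)
      then have uv: "u - v = \<tau> *\<^sub>R (\<Sum>k=1..N. R k (w k))" using dec by simp
      have "(\<Sum>k=1..N. ereal \<omega> * d k (w k) v + Gk k (w k) v) = ereal (\<Sum>k=1..N. \<omega> * dr k + gr k)"
        by (rule sum_ereal_eq) (simp add: dr gr)
      then have inS: "ereal (\<Sum>k=1..N. \<omega> * dr k + gr k) \<in> S" unfolding S_def using w uv by force
      have "Inf S \<le> ereal (\<Sum>k=1..N. \<omega> * dr k + gr k)" by (rule Inf_lower[OF inS])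
      then have "ereal \<tau> * Inf S \<le> ereal \<tau> * ereal (\<Sum>k=1..N. \<omega> * dr k + gr k)"
        using tau by (intro ereal_mult_left_mono) auto
      then have "ereal \<tau> * Inf S + ereal ((1 - \<tau> * real N) * gv) \<le> ereal \<tau> * ereal (\<Sum>k=1..N. \<omega> * dr k + gr k) + ereal ((1 - \<tau> * real N) * gv)"
        by (rule add_right_mono)
      then have M': "M_tau_omega N Vk R d Gk G \<tau> \<omega> u v \<le> ereal (\<tau> * (\<Sum>k=1..N. \<omega> * dr k + gr k) + (1 - \<tau> * real N) * gv)"
        unfolding M by simp
      have nrm: "norm (u' - v) powr q = norm (u - v) powr q / \<tau> powr q"
      proof -
        have "u' - v = (1 / \<tau>) *\<^sub>R (u - v)" unfolding u'_def by (simp add: algebra_simps)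
        then have "norm (u' - v) = norm (u - v) / \<tau>" using tau by simp
        then show ?thesis using tau by (simp add: powr_divide)
      qed
      have tq: "\<tau> powr (q - 1) = \<tau> powr q / \<tau>" using tau by (simp add: powr_diff)
      have "\<tau> * (\<Sum>k=1..N. \<omega> * dr k + gr k) = \<tau> * \<omega> * (\<Sum>k=1..N. dr k) + \<tau> * (\<Sum>k=1..N. gr k)"
        by (simp add: sum.distrib sum_distrib_left algebra_simps)
      also have "\<dots> \<le> \<tau> * \<omega> * (C0 K' powr q / q * norm (u' - v) powr q) + \<tau> * (gu' + (real N - 1) * gv)"
        using sdr sgr tau omega omega0 by (intro add_mono mult_left_mono) auto
      also have "\<tau> * \<omega> * (C0 K' powr q / q * norm (u' - v) powr q) = \<omega> * C0 K' powr q / (q * \<tau> powr (q - 1)) * norm (u - v) powr q"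
        unfolding nrm tq using tau q_gt by (simp add: field_simps)
      finally have real_ineq: "\<tau> * (\<Sum>k=1..N. \<omega> * dr k + gr k) + (1 - \<tau> * real N) * gv
          \<le> \<omega> * C0 K' powr q / (q * \<tau> powr (q - 1)) * norm (u - v) powr q + \<tau> * gu' + (1 - \<tau>) * gv"
        by (simp add: algebra_simps)
      have "ereal (\<tau> * (\<Sum>k=1..N. \<omega> * dr k + gr k) + (1 - \<tau> * real N) * gv)
          \<le> ereal (\<omega> * C0 K' powr q / (q * \<tau> powr (q - 1)) * norm (u - v) powr q + \<tau> * gu' + (1 - \<tau>) * gv)"
        using real_ineq by (simp only: ereal_less_eq)
      with M' have fin: "M_tau_omega N Vk R d Gk G \<tau> \<omega> u v \<le> ereal (\<omega> * C0 K' powr q / (q * \<tau> powr (q - 1)) * norm (u - v) powr q + \<tau> * gu' + (1 - \<tau>) * gv)"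
        by (rule order_trans)
      show ?thesis unfolding u'_def[symmetric] gu' gv using fin by simp
    qed
  qed
  then show ?thesis unfolding K'_def .
  qed
  show ?thesis unfolding Let_def by (intro allI impI) (erule main)
qed

end
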